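(* In the setting of the soft-label KNN classification utility, assume $N\ge\max(2,K)$ and let $K^*$ be an integer with $1\le K^*<N$. Write $a_i:=\mathbb 1[y_i=y_{\mathrm{test}}]$. Define $\widehat\phi\in\mathbb R^N$ by $\widehat\phi_i=\frac1N\big(\frac12-\frac1C\big)$ for $K^*\le i\le N$, and recursively for $i=K^*-1,K^*-2,\dots,1$, $$\widehat\phi_i=\widehat\phi_{i+1}+\frac{a_i-a_{i+1}}{N-1}\left[\sum_{j=1}^{K}\frac1j+\frac1K\Big(\frac{\min(i,K)(N-1)}{i}-K\Big)\right].$$ Then, with $\phi=(\phi_1,\dots,\phi_N)$ the Shapley values, $$\|\widehat\phi-\phi\|_\infty\le\frac1N\sum_{j=2}^{K-1}\frac1{j+1}+\frac{1}{\max(K^*,K)},$$ where the sum is empty (zero) when $K\le 2$.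
   Context: Training data $(x_i,y_i)$, $i\in\mathcal I=\{1,\dots,N\}$, with $x_i\in\mathbb R^d$ and labels in a set of $C\ge1$ classes; test point $(x_{\mathrm{test}},y_{\mathrm{test}})$; $K\ge 1$ an integer. Indices are sorted so that $\|x_1-x_{\mathrm{test}}\|\le\dots\le\|x_N-x_{\mathrm{test}}\|$ (Euclidean norm, ties broken by index). For nonempty $S\subseteq\mathcal I$, $\pi^{(S)}(j)$ is the $j$-th smallest index in $S$. The utility is $v(\emptyset)=\frac1C$ and, for $S\ne\emptyset$, $v(S)=\frac{1}{\min(K,|S|)}\sum_{j=1}^{\min(K,|S|)}\mathbb 1[y_{\pi^{(S)}(j)}=y_{\mathrm{test}}]$. The Shapley value of $i$ is $\phi_i=\frac1N\sum_{k=1}^{N}\binom{N-1}{k-1}^{-1}\sum_{S\subseteq\mathcal I\setminus\{i\},\,|S|=k-1}\big[v(S\cup\{i\})-v(S)\big]$. *)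

theory Defs
  imports "HOL-Analysis.Analysis"
begin

text \<open>Training indices are 1..N, already sorted by distance to the test point.
  pi_S S j = the j-th smallest index of S (j counted from 1).\<close>

definition pi_S :: "nat set \<Rightarrow> nat \<Rightarrow> nat" where
  "pi_S S j = sorted_list_of_set S ! (j - 1)"

definition knn_utility :: "nat \<Rightarrow> nat \<Rightarrow> (nat \<Rightarrow> 'c) \<Rightarrow> 'c \<Rightarrow> nat set \<Rightarrow> real" where
  "knn_utility K C y ytest S =
     (if S = {} then 1 / real C
      else (1 / real (min K (card S))) *
           (\<Sum>j = 1..min K (card S). (if y (pi_S S j) = ytest then 1 else 0)))"

definition shapley :: "nat \<Rightarrow> nat \<Rightarrow> nat \<Rightarrow> (nat \<Rightarrow> 'c) \<Rightarrow> 'c \<Rightarrow> nat \<Rightarrow> real" where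
  "shapley N K C y ytest i =
     (1 / real N) * (\<Sum>k = 1..N. (1 / real ((N - 1) choose (k - 1))) *
        (\<Sum>S \<in> {S. S \<subseteq> {1..N} - {i} \<and> card S = k - 1}.
           knn_utility K C y ytest (S \<union> {i}) - knn_utility K C y ytest S))"

end

theory Submission
  imports Defs
begin


lemma chu: "(\<Sum>n\<le>m. (n choose j) * ((m - n) choose a)) = Suc m choose (j + a + 1)"
proof (induction m arbitrary: a)
  case 0
  then show ?case by (cases j; cases a) auto
next
  case (Suc m)
  note IH = Suc.IH
  show ?case
  proof (cases a)
    case 0
    have "(\<Sum>n\<le>Suc m. n choose j) = Suc (Suc m) choose Suc j"
      by (rule sum_choose_upper)
    then show ?thesis using 0 by simp
  next
    case (Suc b)
    have "(\<Sum>n\<le>Suc m. (n choose j) * ((Suc m - n) choose a))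
        = (\<Sum>n\<le>m. (n choose j) * ((Suc m - n) choose a))"
      using Suc by simp
    also have "\<dots> = (\<Sum>n\<le>m. (n choose j) * ((m - n) choose b) + (n choose j) * ((m - n) choose a))"
      by (rule sum.cong) (auto simp: Suc Suc_diff_le algebra_simps)
    also have "\<dots> = (Suc m choose (j + b + 1)) + (Suc m choose (j + a + 1))"
      by (simp only: sum.distrib IH)
    also have "\<dots> = Suc (Suc m) choose (j + a + 1)"
      using Suc by simp
    finally show ?thesis .
  qed
qed

lemma swap_choose:
  assumes "a \<le> M" "b \<le> M"
  shows "(M choose a) * ((M - a) choose b) = (M choose b) * ((M - b) choose a)"
proof (cases "a + b \<le> M")
  case True
  have 1: "(M choose (a+b)) * ((a+b) choose a) = (M choose a) * ((M - a) choose b)"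
    using choose_mult[of a "a+b" M] True by simp
  have 2: "(M choose (a+b)) * ((a+b) choose b) = (M choose b) * ((M - b) choose a)"
    using choose_mult[of b "a+b" M] True by simp
  have "(a+b) choose a = (a+b) choose b"
    using binomial_symmetric[of a "a+b"] by simp
  then show ?thesis using 1 2 by simp
next
  case False
  then have "M - a < b" "M - b < a" using assms by auto
  then show ?thesis by (simp add: binomial_eq_0)
qed

lemma cross:
  assumes "j \<le> n" "n \<le> m" "j \<le> l" "l \<le> m"
  shows "(l choose j) * ((m-l) choose (n-j)) * (m choose l) = (n choose j) * ((m-n) choose (l-j)) * (m choose n)"
proof -
  have 1: "(m choose l) * (l choose j) = (m choose j) * ((m-j) choose (l-j))"
    using choose_mult[of j l m] assms by simp
  have 2: "(m choose n) * (n choose j) = (m choose j) * ((m-j) choose (n-j))"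
    using choose_mult[of j n m] assms by simp
  have 3: "((m-j) choose (l-j)) * ((m-j-(l-j)) choose (n-j)) = ((m-j) choose (n-j)) * ((m-j-(n-j)) choose (l-j))"
    using swap_choose[of "l-j" "m-j" "n-j"] assms by simp
  have e1: "m-j-(l-j) = m - l" and e2: "m-j-(n-j) = m-n" using assms by auto
  have "(l choose j) * ((m-l) choose (n-j)) * (m choose l) = (m choose j) * (((m-j) choose (l-j)) * ((m-l) choose (n-j)))"
    using 1 by (metis mult.commute mult.left_commute)
  also have "\<dots> = (m choose j) * (((m-j) choose (n-j)) * ((m-n) choose (l-j)))"
    using 3 e1 e2 by simp
  also have "\<dots> = (n choose j) * ((m-n) choose (l-j)) * (m choose n)"
    using 2 by (metis mult.commute mult.left_commute)
  finally show ?thesis .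
qed

definition cnt :: "nat \<Rightarrow> nat \<Rightarrow> nat \<Rightarrow> nat \<Rightarrow> nat" where
  "cnt m l n j = (if j \<le> n then (l choose j) * ((m-l) choose (n-j)) else 0)"

definition cK :: "nat \<Rightarrow> nat \<Rightarrow> nat \<Rightarrow> nat \<Rightarrow> nat" where
  "cK m l K n = (\<Sum>j<K. cnt m l n j)"

lemma core:
  assumes "j \<le> l" "l \<le> m"
  shows "(\<Sum>n\<le>m. real (cnt m l n j) / real (m choose n)) = real (m+1) / real (l+1)"
proof -
  have pos: "real (m choose l) > 0" using assms by simp
  have "(\<Sum>n\<le>m. real (cnt m l n j) / real (m choose n))
      = (\<Sum>n\<le>m. real ((n choose j) * ((m-n) choose (l-j))) / real (m choose l))"
  proof (rule sum.cong)
    fix n assume n: "n \<in> {..m}"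
    show "real (cnt m l n j) / real (m choose n) = real ((n choose j) * ((m-n) choose (l-j))) / real (m choose l)"
    proof (cases "j \<le> n")
      case True
      have e: "(l choose j) * ((m-l) choose (n-j)) * (m choose l) = (n choose j) * ((m-n) choose (l-j)) * (m choose n)"
        using cross[of j n m l] True n assms by simp
      have e2: "real ((l choose j) * ((m-l) choose (n-j))) * real (m choose l) = real ((n choose j) * ((m-n) choose (l-j))) * real (m choose n)"
        using arg_cong[OF e, of real] by (simp only: of_nat_mult)
      have pn: "real (m choose n) \<noteq> 0" using n by simp
      have "real (cnt m l n j) = real ((l choose j) * ((m-l) choose (n-j)))" using True by (simp add: cnt_def)
      then show ?thesis using e2 pn pos by (simp add: frac_eq_eq)
    next
      case False
      then show ?thesis by (simp add: cnt_def)
    qed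
  qed simp
  also have "\<dots> = real (\<Sum>n\<le>m. (n choose j) * ((m-n) choose (l-j))) / real (m choose l)"
    by (simp add: sum_divide_distrib)
  also have "\<dots> = real (Suc m choose (l+1)) / real (m choose l)"
  proof -
    have "j + (l - j) + 1 = l + 1" using assms by simp
    moreover have "(\<Sum>n\<le>m. (n choose j) * ((m-n) choose (l-j))) = Suc m choose (j + (l-j) + 1)"
      by (rule chu)
    ultimately have "(\<Sum>n\<le>m. (n choose j) * ((m-n) choose (l-j))) = Suc m choose (l+1)"
      by simp
    then show ?thesis by simp
  qed
  also have "\<dots> = real (m+1) / real (l+1)"
  proof -
    have "Suc l * (Suc m choose Suc l) = Suc m * (m choose l)" by (rule Suc_times_binomial)
    then have "real (Suc l) * real (Suc m choose Suc l) = real (Suc m) * real (m choose l)"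
      by (simp only: of_nat_mult[symmetric])
    then show ?thesis using pos by (simp add: field_simps)
  qed
  finally show ?thesis .
qed

lemma vand: "l \<le> m \<Longrightarrow> n < K \<Longrightarrow> cK m l K n = m choose n"
proof -
  assume a: "l \<le> m" "n < K"
  have "cK m l K n = (\<Sum>j\<in>{..<K}. if j \<le> n then (l choose j) * ((m-l) choose (n-j)) else 0)"
    by (simp add: cK_def cnt_def)
  also have "\<dots> = (\<Sum>j\<in>{..<K} \<inter> {j. j \<le> n}. (l choose j) * ((m-l) choose (n-j)))"
    by (simp add: sum.inter_restrict)
  also have "{..<K} \<inter> {j. j \<le> n} = {..n}" using a by auto
  also have "(\<Sum>j\<in>{..n}. (l choose j) * ((m-l) choose (n-j))) = (l + (m - l)) choose n"
    by (rule vandermonde)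
  finally show ?thesis using a by simp
qed

lemma N3:
  assumes "l \<le> m"
  shows "(\<Sum>n\<le>m. real (cK m l K n) / real (m choose n)) = real (min K (l+1)) * real (m+1) / real (l+1)"
proof -
  have "(\<Sum>n\<le>m. real (cK m l K n) / real (m choose n)) = (\<Sum>n\<le>m. \<Sum>j<K. real (cnt m l n j) / real (m choose n))"
    by (simp add: cK_def sum_divide_distrib)
  also have "\<dots> = (\<Sum>j<K. \<Sum>n\<le>m. real (cnt m l n j) / real (m choose n))"
    by (rule sum.swap)
  also have "\<dots> = (\<Sum>j<K. if j \<le> l then real (m+1) / real (l+1) else 0)"
  proof (rule sum.cong)
    fix j assume "j \<in> {..<K}"
    show "(\<Sum>n\<le>m. real (cnt m l n j) / real (m choose n)) = (if j \<le> l then real (m+1) / real (l+1) else 0)"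
    proof (cases "j \<le> l")
      case True then show ?thesis using core[OF True assms] by simp
    next
      case False
      then have "l choose j = 0" by (simp add: binomial_eq_0)
      then have z: "\<And>n. cnt m l n j = 0" unfolding cnt_def by simp
      show ?thesis using False by (simp add: z)
    qed
  qed simp
  also have "\<dots> = (\<Sum>j\<in>{..<K} \<inter> {j. j \<le> l}. real (m+1) / real (l+1))"
    by (subst sum.inter_restrict) auto
  also have "{..<K} \<inter> {j. j \<le> l} = {..<min K (l+1)}" by auto
  finally show ?thesis by simp
qed

definition H :: "nat \<Rightarrow> real" where "H K = (\<Sum>j=1..K. 1 / real j)"

lemma H_alt: "H K = (\<Sum>n<K. 1 / real (n+1))"
  unfolding H_def by (induction K) auto

lemma GN:
  assumes K1: "K \<ge> 1" and lm: "l \<le> m" and Km: "K \<le> m + 2"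
  shows "(\<Sum>n\<le>m. real (cK m l K n) / (real (m choose n) * real (min K (n+1))))
         = H K - 1 + real (min K (l+1)) * real (m+1) / (real (l+1) * real K)"
proof -
  have trm: "real (cK m l K n) / (real (m choose n) * real (min K (n+1)))
      = (real (cK m l K n) / real (m choose n)) / real K + (if n + 1 < K then 1 / real (n+1) - 1 / real K else 0)"
    if n: "n \<le> m" for n
  proof (cases "n + 1 < K")
    case True
    then have c: "real (cK m l K n) = real (m choose n)" using vand[OF lm] by simp
    have p: "real (m choose n) \<noteq> 0" using n by simp
    have mn: "min K (n+1) = n+1" using True by simp
    show ?thesis using True K1 p by (simp add: mn c)
  next
    case False
    then show ?thesis by (simp add: min_def)
  qed
  have "(\<Sum>n\<le>m. real (cK m l K n) / (real (m choose n) * real (min K (n+1))))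
      = (\<Sum>n\<le>m. real (cK m l K n) / real (m choose n)) / real K
        + (\<Sum>n\<le>m. if n + 1 < K then 1 / real (n+1) - 1 / real K else 0)"
  proof -
    have "(\<Sum>n\<le>m. real (cK m l K n) / (real (m choose n) * real (min K (n+1))))
       = (\<Sum>n\<le>m. (real (cK m l K n) / real (m choose n)) / real K + (if n + 1 < K then 1 / real (n+1) - 1 / real K else 0))"
      by (rule sum.cong) (simp_all only: trm atMost_iff)
    then show ?thesis by (simp only: sum.distrib sum_divide_distrib)
  qed
  also have "(\<Sum>n\<le>m. if n + 1 < K then 1 / real (n+1) - 1 / real K else 0)
      = (\<Sum>n\<in>{..m} \<inter> {n. n + 1 < K}. 1 / real (n+1) - 1 / real K)"
    by (subst sum.inter_restrict) auto
  also have "{..m} \<inter> {n. n + 1 < K} = {..<K-1}" using Km K1 by auto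
  also have "(\<Sum>n\<in>{..<K-1}. 1 / real (n+1) - 1 / real K) = H K - 1"
  proof -
    obtain k where k: "K = Suc k" using K1 by (cases K) auto
    define S where "S = (\<Sum>n<k. 1 / real (n+1))"
    have A: "(\<Sum>n\<in>{..<K-1}. 1 / real (n+1) - 1 / real K) = S - real k / real K"
      using k by (simp add: sum_subtractf S_def)
    have B: "H K = S + 1 / real K" using k by (simp add: H_alt S_def)
    have C: "real k / real K = 1 - 1 / real K" using k by (simp add: field_simps)
    show ?thesis using A B C by simp
  qed
  finally show ?thesis using N3[OF lm, of K] by (simp add: field_simps)
qed




lemma card_split:
  assumes fM: "finite M" and LM: "L \<subseteq> M"
  shows "card {T. T \<subseteq> M \<and> card T = n \<and> card (T \<inter> L) = j} = cnt (card M) (card L) n j"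
proof (cases "j \<le> n")
  case False
  have E: "{T. T \<subseteq> M \<and> card T = n \<and> card (T \<inter> L) = j} = {}"
  proof -
    have "\<And>T. T \<subseteq> M \<Longrightarrow> card (T \<inter> L) \<le> card T"
      using fM by (meson card_mono finite_subset inf_le1)
    then show ?thesis using False by fastforce
  qed
  show ?thesis unfolding E using False by (simp add: cnt_def)
next
  case True
  have fL: "finite L" using fM LM by (rule finite_subset[rotated])
  define X where "X = {A. A \<subseteq> L \<and> card A = j}"
  define Y where "Y = {B. B \<subseteq> M - L \<and> card B = n - j}"
  have eq: "{T. T \<subseteq> M \<and> card T = n \<and> card (T \<inter> L) = j} = (\<lambda>(A,B). A \<union> B) ` (X \<times> Y)"
  proof
    show "{T. T \<subseteq> M \<and> card T = n \<and> card (T \<inter> L) = j} \<subseteq> (\<lambda>(A,B). A \<union> B) ` (X \<times> Y)"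
    proof
      fix T assume "T \<in> {T. T \<subseteq> M \<and> card T = n \<and> card (T \<inter> L) = j}"
      then have T: "T \<subseteq> M" "card T = n" "card (T \<inter> L) = j" by auto
      have fT: "finite T" using T fM by (auto intro: finite_subset)
      have "card (T - L) = card T - card (T \<inter> L)"
        using fT by (simp add: card_Diff_subset_Int)
      then have "(T \<inter> L, T - L) \<in> X \<times> Y" using T by (auto simp: X_def Y_def)
      moreover have "T = (\<lambda>(A,B). A \<union> B) (T \<inter> L, T - L)" by auto
      ultimately show "T \<in> (\<lambda>(A,B). A \<union> B) ` (X \<times> Y)" by blast
    qed
  next
    show "(\<lambda>(A,B). A \<union> B) ` (X \<times> Y) \<subseteq> {T. T \<subseteq> M \<and> card T = n \<and> card (T \<inter> L) = j}"
    proof clarify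
      fix A B assume A: "A \<in> X" and B: "B \<in> Y"
      have fA: "finite A" using A fL by (auto simp: X_def intro: finite_subset)
      have fB: "finite B" using B fM by (auto simp: Y_def intro: finite_subset)
      have d: "A \<inter> B = {}" using A B by (auto simp: X_def Y_def)
      have "card (A \<union> B) = j + (n - j)" using card_Un_disjoint[OF fA fB d] A B by (simp add: X_def Y_def)
      moreover have "(A \<union> B) \<inter> L = A" using A B by (auto simp: X_def Y_def)
      ultimately show "A \<union> B \<subseteq> M \<and> card (A \<union> B) = n \<and> card ((A \<union> B) \<inter> L) = j"
        using A B True LM by (auto simp: X_def Y_def)
    qed
  qed
  have inj: "inj_on (\<lambda>(A,B). A \<union> B) (X \<times> Y)"
  proof (rule inj_onI, clarify)
    fix A B A' B' assume a: "A \<in> X" "B \<in> Y" "A' \<in> X" "B' \<in> Y" and e: "A \<union> B = A' \<union> B'"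
    have "A = (A \<union> B) \<inter> L" "A' = (A' \<union> B') \<inter> L" "B = (A \<union> B) - L" "B' = (A' \<union> B') - L"
      using a by (auto simp: X_def Y_def)
    then show "A = A' \<and> B = B'" using e by metis
  qed
  have cX: "card X = card L choose j" unfolding X_def by (rule n_subsets[OF fL])
  have cY: "card Y = (card M - card L) choose (n - j)"
    unfolding Y_def using n_subsets[of "M - L" "n-j"] fM card_Diff_subset[OF fL LM] by simp
  show ?thesis unfolding eq card_image[OF inj] card_cartesian_product cX cY
    using True by (simp add: cnt_def)
qed

lemma count_lt:
  assumes fM: "finite M" and LM: "L \<subseteq> M"
  shows "card {T. T \<subseteq> M \<and> card T = n \<and> card (T \<inter> L) < K} = cK (card M) (card L) K n"
proof -
  have eq: "{T. T \<subseteq> M \<and> card T = n \<and> card (T \<inter> L) < K} = (\<Union>j\<in>{..<K}. {T. T \<subseteq> M \<and> card T = n \<and> card (T \<inter> L) = j})"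
    by auto
  have "card (\<Union>j\<in>{..<K}. {T. T \<subseteq> M \<and> card T = n \<and> card (T \<inter> L) = j})
      = (\<Sum>j<K. card {T. T \<subseteq> M \<and> card T = n \<and> card (T \<inter> L) = j})"
    by (rule card_UN_disjoint) (use fM in auto)
  then show ?thesis unfolding eq cK_def using card_split[OF fM LM] by simp
qed

definition rk :: "nat set \<Rightarrow> nat \<Rightarrow> nat" where "rk S s = card {t\<in>S. t<s}"

lemma rank_nth:
  fixes xs :: "nat list"
  assumes s: "sorted_wrt (<) xs" and q: "q < length xs"
  shows "card {t \<in> set xs. t < xs!q} = q"
proof -
  have d: "distinct xs" using iffD1[OF strict_sorted_iff[of xs] s] by (rule conjunct2)
  have lt: "\<And>r r'. r < r' \<Longrightarrow> r' < length xs \<Longrightarrow> xs!r < xs!r'"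
    using s unfolding sorted_wrt_iff_nth_less by blast
  have "{t \<in> set xs. t < xs!q} = (\<lambda>r. xs!r) ` {..<q}"
  proof
    show "{t \<in> set xs. t < xs!q} \<subseteq> (\<lambda>r. xs!r) ` {..<q}"
    proof clarify
      fix t assume t: "t \<in> set xs" "t < xs!q"
      then obtain r where r: "r < length xs" "t = xs!r" by (auto simp: in_set_conv_nth)
      have "r < q"
      proof (rule ccontr)
        assume "\<not> r < q"
        then have "r = q \<or> q < r" by auto
        then show False
        proof
          assume "r = q" then show False using t r by simp
        next
          assume "q < r" then have "xs!q < xs!r" using lt[of q r] r by blast
          then show False using t r by simp
        qed
      qed
      then show "t \<in> (\<lambda>r. xs!r) ` {..<q}" using r by auto
    qed
  next
    show "(\<lambda>r. xs!r) ` {..<q} \<subseteq> {t \<in> set xs. t < xs!q}"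
    proof clarify
      fix r assume r: "r < q"
      then have "xs!r < xs!q" using lt[of r q] q by blast
      moreover have "xs!r \<in> set xs" using r q by simp
      ultimately show "xs!r \<in> set xs \<and> xs!r < xs!q" by blast
    qed
  qed
  moreover have "inj_on (\<lambda>r. xs!r) {..<q}"
    using d q by (auto simp: inj_on_def nth_eq_iff_index_eq)
  ultimately show ?thesis by (simp add: card_image)
qed

lemma pi_sum:
  assumes fS: "finite S" and m: "m \<le> card S"
  shows "(\<Sum>j=1..m. f (pi_S S j)) = (\<Sum>s\<in>{s\<in>S. rk S s < m}. f s)"
proof -
  define xs where "xs = sorted_list_of_set S"
  have s: "sorted_wrt (<) xs" unfolding xs_def by (rule strict_sorted_list_of_set)
  have set: "set xs = S" unfolding xs_def using fS by simp
  have len: "length xs = card S" unfolding xs_def using fS by simp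
  have d: "distinct xs" unfolding xs_def by simp
  have "(\<Sum>j=1..m. f (pi_S S j)) = (\<Sum>q<m. f (xs!q))"
  proof -
    have "(\<Sum>j=1..m. f (pi_S S j)) = (\<Sum>q\<in>{..<m}. f (pi_S S (Suc q)))"
    proof -
      have "{1..m} = Suc ` {..<m}"
      proof
        show "{1..m} \<subseteq> Suc ` {..<m}"
        proof
          fix x assume "x \<in> {1..m}"
          then have "x = Suc (x - 1)" "x - 1 < m" by auto
          then show "x \<in> Suc ` {..<m}" by blast
        qed
      qed auto
      then show ?thesis by (simp add: sum.reindex)
    qed
    then show ?thesis by (simp add: pi_S_def xs_def)
  qed
  also have "\<dots> = (\<Sum>s\<in>(\<lambda>q. xs!q) ` {..<m}. f s)"
    using d m len by (subst sum.reindex) (auto simp: inj_on_def nth_eq_iff_index_eq)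
  also have "(\<lambda>q. xs!q) ` {..<m} = {s\<in>S. rk S s < m}"
  proof
    show "(\<lambda>q. xs!q) ` {..<m} \<subseteq> {s\<in>S. rk S s < m}"
    proof clarify
      fix q assume q: "q < m"
      then have ql: "q < length xs" using m len by simp
      have "rk S (xs!q) = q" unfolding rk_def using rank_nth[OF s ql] set by simp
      then show "xs!q \<in> S \<and> rk S (xs!q) < m" using q ql set by auto
    qed
  next
    show "{s\<in>S. rk S s < m} \<subseteq> (\<lambda>q. xs!q) ` {..<m}"
    proof clarify
      fix s assume a: "s \<in> S" "rk S s < m"
      then obtain q where q: "q < length xs" "s = xs!q" using set by (auto simp: in_set_conv_nth)
      have "rk S (xs!q) = q" unfolding rk_def using rank_nth[OF s q(1)] set by simp
      then show "s \<in> (\<lambda>q. xs!q) ` {..<m}" using a q by auto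
    qed
  qed
  finally show ?thesis .
qed

lemma util:
  assumes "finite S" "S \<noteq> {}"
  shows "knn_utility K C y yt S = (\<Sum>s\<in>{s\<in>S. rk S s < min K (card S)}. (if y s = yt then 1 else 0)) / real (min K (card S))"
  using assms pi_sum[of S "min K (card S)" "\<lambda>s. if y s = yt then 1 else (0::real)"]
  by (simp add: knn_utility_def)

lemma rk_ins:
  assumes "finite S" "x \<notin> S" "s \<in> S"
  shows "rk (insert x S) s = rk S s + (if x < s then 1 else 0)"
proof (cases "x < s")
  case True
  have "{t\<in>insert x S. t<s} = insert x {t\<in>S. t<s}" using True by auto
  then show ?thesis using True assms by (simp add: rk_def)
next
  case False
  have "{t\<in>insert x S. t<s} = {t\<in>S. t<s}" using False by auto
  then show ?thesis using False by (simp add: rk_def)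
qed

lemma rk_ins_self: "rk (insert x S) x = rk S x"
proof -
  have "{t\<in>insert x S. t<x} = {t\<in>S. t<x}" by auto
  then show ?thesis by (simp add: rk_def)
qed

lemma rk_le: "finite S \<Longrightarrow> rk S s \<le> card S"
  unfolding rk_def by (rule card_mono) auto

lemma top_ins:
  assumes fS: "finite S" and x: "x \<notin> S"
  shows "(\<Sum>s\<in>{s\<in>insert x S. rk (insert x S) s < m}. f s)
       = (if rk S x < m then f x else 0) + (\<Sum>s\<in>{s\<in>S. rk S s + (if x < s then 1 else 0) < m}. f s)"
proof -
  have e: "{s\<in>S. rk (insert x S) s < m} = {s\<in>S. rk S s + (if x < s then 1 else 0) < m}"
  proof (rule Collect_cong)
    fix s show "(s \<in> S \<and> rk (insert x S) s < m) = (s \<in> S \<and> rk S s + (if x < s then 1 else 0) < m)"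
      using rk_ins[OF fS x, of s] by (cases "s \<in> S") simp_all
  qed
  have fin: "finite {s\<in>S. rk S s + (if x < s then 1 else 0) < m}" using fS by simp
  have split: "{s\<in>insert x S. P s} = (if P x then insert x {s\<in>S. P s} else {s\<in>S. P s})" for P
    by auto
  have sp: "{s\<in>insert x S. rk (insert x S) s < m} = (if rk S x < m then insert x {s\<in>S. rk S s + (if x < s then 1 else 0) < m} else {s\<in>S. rk S s + (if x < s then 1 else 0) < m})"
    unfolding split[of "\<lambda>s. rk (insert x S) s < m"] e rk_ins_self ..
  show ?thesis
  proof (cases "rk S x < m")
    case True
    then show ?thesis unfolding sp using fin x by simp
  next
    case False
    then show ?thesis unfolding sp by simp
  qed
qed




lemma rk_lt: assumes "finite S" "s \<in> S" shows "rk S s < card S"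
proof -
  have "{t\<in>S. t<s} \<subset> S" using assms by auto
  then show ?thesis unfolding rk_def using assms(1) by (rule psubset_card_mono[rotated])
qed

lemma rk_strict: assumes "finite S" "s \<in> S" "s < t" shows "rk S s < rk S t"
proof -
  have "{u\<in>S. u<s} \<subset> {u\<in>S. u<t}" using assms by auto
  then show ?thesis unfolding rk_def using assms(1) by (intro psubset_card_mono) auto
qed

lemma rk_mono: assumes "finite S" "s \<le> t" shows "rk S s \<le> rk S t"
  unfolding rk_def using assms by (intro card_mono) auto

lemma dT:
  assumes fT: "finite T" and i: "i \<notin> T" and i': "Suc i \<notin> T"
  shows "knn_utility K C y yt (insert i T) - knn_utility K C y yt (insert (Suc i) T)
       = (if rk T i < K then (if y i = yt then 1 else 0) - (if y (Suc i) = yt then 1 else 0) else 0) / real (min K (card T + 1))"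
proof -
  define f where "f = (\<lambda>s. if y s = yt then 1 else (0::real))"
  define m where "m = min K (card T + 1)"
  define Q where "Q = {s\<in>T. rk T s + (if i < s then 1 else 0) < m}"
  have Q': "{s\<in>T. rk T s + (if Suc i < s then 1 else 0) < m} = Q"
  proof -
    have "(i < s) = (Suc i < s)" if "s \<in> T" for s
    proof -
      have "s \<noteq> Suc i" "s \<noteq> i" using that i i' by auto
      then show ?thesis by linarith
    qed
    then show ?thesis unfolding Q_def by (intro Collect_cong) auto
  qed
  have r: "rk T (Suc i) = rk T i"
  proof -
    have "{t\<in>T. t < Suc i} = {t\<in>T. t < i}" using i by (auto simp: less_Suc_eq)
    then show ?thesis by (simp add: rk_def)
  qed
  have c1: "card (insert i T) = card T + 1" using fT i by simp
  have c2: "card (insert (Suc i) T) = card T + 1" using fT i' by simp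
  have v1: "knn_utility K C y yt (insert i T) = ((if rk T i < m then f i else 0) + sum f Q) / real m"
  proof -
    have "knn_utility K C y yt (insert i T) = sum f {s\<in>insert i T. rk (insert i T) s < m} / real m"
      using util[of "insert i T" K C y yt] fT unfolding c1 m_def f_def by simp
    also have "sum f {s\<in>insert i T. rk (insert i T) s < m} = (if rk T i < m then f i else 0) + sum f Q"
      unfolding Q_def by (rule top_ins[OF fT i])
    finally show ?thesis .
  qed
  have v2: "knn_utility K C y yt (insert (Suc i) T) = ((if rk T i < m then f (Suc i) else 0) + sum f Q) / real m"
  proof -
    have "knn_utility K C y yt (insert (Suc i) T) = sum f {s\<in>insert (Suc i) T. rk (insert (Suc i) T) s < m} / real m"
      using util[of "insert (Suc i) T" K C y yt] fT unfolding c2 m_def f_def by simp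
    also have "sum f {s\<in>insert (Suc i) T. rk (insert (Suc i) T) s < m} = (if rk T (Suc i) < m then f (Suc i) else 0) + sum f {s\<in>T. rk T s + (if Suc i < s then 1 else 0) < m}"
      by (rule top_ins[OF fT i'])
    finally show ?thesis unfolding Q' r .
  qed
  have "rk T i \<le> card T" using fT by (rule rk_le)
  then have cond: "(rk T i < m) = (rk T i < K)" unfolding m_def by auto
  have "knn_utility K C y yt (insert i T) - knn_utility K C y yt (insert (Suc i) T) = (if rk T i < K then f i - f (Suc i) else 0) / real m"
    unfolding v1 v2 cond by (cases "rk T i < K") (simp_all add: diff_divide_distrib[symmetric])
  then show ?thesis by (simp add: f_def m_def)
qed

lemma Dbound:
  assumes K1: "K \<ge> 1" and fS: "finite S" and i: "i \<notin> S" and ne: "S \<noteq> {}"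
  shows "\<bar>knn_utility K C y yt (insert i S) - knn_utility K C y yt S\<bar>
       \<le> (if rk S i < K then 1 else 0) / real (min K (card S + 1))"
proof -
  define f where "f = (\<lambda>s. if y s = yt then 1 else (0::real))"
  define n where "n = card S"
  have n1: "n \<ge> 1" using fS ne by (simp add: n_def Suc_le_eq card_gt_0_iff)
  have f01: "\<And>s. 0 \<le> f s \<and> f s \<le> 1" by (simp add: f_def)
  have c1: "card (insert i S) = n + 1" using fS i by (simp add: n_def)
  have vS: "knn_utility K C y yt S = sum f {s\<in>S. rk S s < min K n} / real (min K n)"
    using util[OF fS ne, of K C y yt] by (simp add: f_def n_def)
  have vSi: "knn_utility K C y yt (insert i S) = ((if rk S i < min K (n+1) then f i else 0) + sum f {s\<in>S. rk S s + (if i < s then 1 else 0) < min K (n+1)}) / real (min K (n+1))"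
  proof -
    have "knn_utility K C y yt (insert i S) = sum f {s\<in>insert i S. rk (insert i S) s < min K (n+1)} / real (min K (n+1))"
      using util[of "insert i S" K C y yt] fS unfolding c1 f_def by simp
    also have "sum f {s\<in>insert i S. rk (insert i S) s < min K (n+1)} = (if rk S i < min K (n+1) then f i else 0) + sum f {s\<in>S. rk S s + (if i < s then 1 else 0) < min K (n+1)}"
      by (rule top_ins[OF fS i])
    finally show ?thesis .
  qed
  show ?thesis
  proof (cases "n < K")
    case True
    have rkl: "\<And>s. s \<in> S \<Longrightarrow> rk S s < n" using rk_lt[OF fS] by (simp add: n_def)
    have mK: "min K n = n" "min K (n+1) = n+1" using True by auto
    have e1: "{s\<in>S. rk S s < n} = S" using rkl True by auto
    have e2: "{s\<in>S. rk S s + (if i < s then 1 else 0) < n+1} = S"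
      using rkl True by fastforce
    have ri: "rk S i < n+1" using rk_le[OF fS, of i] True by (simp add: n_def)
    define A where "A = sum f S"
    have A: "0 \<le> A" "A \<le> real n"
    proof -
      show "0 \<le> A" unfolding A_def using f01 by (simp add: sum_nonneg)
      have "A \<le> (\<Sum>s\<in>S. 1)" unfolding A_def using f01 by (intro sum_mono) auto
      then show "A \<le> real n" by (simp add: n_def)
    qed
    have "\<bar>(f i + A) / real (n+1) - A / real n\<bar> \<le> 1 / real (n+1)"
    proof -
      have np: "real n > 0" using n1 by simp
      have eq: "(f i + A) / real (n+1) - A / real n = (real n * f i - A) / (real n * real (n+1))"
        using np by (simp add: field_simps)
      have "\<bar>real n * f i - A\<bar> \<le> real n"
      proof -
        have "real n * f i \<le> real n" using f01[of i] np by (simp add: mult_left_le)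
        moreover have "0 \<le> real n * f i" using f01[of i] np by simp
        ultimately show ?thesis using A by (simp add: abs_le_iff)
      qed
      then have "\<bar>real n * f i - A\<bar> / (real n * real (n+1)) \<le> real n / (real n * real (n+1))"
        by (intro divide_right_mono) auto
      then show ?thesis unfolding eq using np by (simp add: abs_divide)
    qed
    moreover have "rk S i < K" using rk_le[OF fS, of i] True by (simp add: n_def)
    ultimately show ?thesis unfolding vS vSi mK e1 e2 n_def[symmetric] using ri mK by (simp add: A_def)
  next
    case False
    have mK: "min K n = K" "min K (n+1) = K" using False by auto
    define Q where "Q = {s\<in>S. rk S s + (if i < s then 1 else 0) < K}"
    define P where "P = {s\<in>S. rk S s < K}"
    have Kp: "real K > 0" using K1 by simp
    show ?thesis
    proof (cases "rk S i < K")
      case False2: False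
      have "Q = P"
      proof -
        have "\<And>s. s \<in> S \<Longrightarrow> i < s \<Longrightarrow> rk S s \<ge> K"
          using rk_mono[OF fS, of i] False2 by (meson le_trans less_imp_le_nat not_le)
        note H = this
        show ?thesis unfolding Q_def P_def
        proof (intro Collect_cong)
          fix s show "(s \<in> S \<and> rk S s + (if i < s then 1 else 0) < K) = (s \<in> S \<and> rk S s < K)"
            using H[of s] by (cases "i < s") auto
        qed
      qed
      then show ?thesis unfolding vS vSi mK using False2 by (simp add: Q_def P_def)
    next
      case True2: True
      define B where "B = {s\<in>S. i < s \<and> rk S s + 1 = K}"
      have PQB: "P = Q \<union> B" "Q \<inter> B = {}" unfolding P_def Q_def B_def by auto
      have fQ: "finite Q" "finite B" unfolding Q_def B_def using fS by auto
      have sP: "sum f P = sum f Q + sum f B" unfolding PQB(1) by (rule sum.union_disjoint[OF fQ PQB(2)])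
      have cB: "card B \<le> 1"
      proof -
        have "\<forall>a1\<in>B. \<forall>a2\<in>B. a1 = a2"
        proof (intro ballI)
          fix a1 a2 assume a: "a1 \<in> B" "a2 \<in> B"
          show "a1 = a2"
          proof (rule ccontr)
            assume "a1 \<noteq> a2"
            then have "a1 < a2 \<or> a2 < a1" by auto
            then show False using a rk_strict[OF fS] unfolding B_def by fastforce
          qed
        qed
        then show ?thesis using card_le_Suc0_iff_eq[OF fQ(2)] by simp
      qed
      have sB: "0 \<le> sum f B" "sum f B \<le> 1"
      proof -
        show "0 \<le> sum f B" using f01 by (simp add: sum_nonneg)
        have "sum f B \<le> (\<Sum>s\<in>B. 1)" using f01 by (intro sum_mono) auto
        then show "sum f B \<le> 1" using cB by simp
      qed
      have "knn_utility K C y yt (insert i S) - knn_utility K C y yt S = (f i - sum f B) / real K"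
      proof -
        have "knn_utility K C y yt (insert i S) - knn_utility K C y yt S = (f i + sum f Q) / real K - sum f P / real K"
          unfolding vS vSi mK Q_def P_def using True2 by simp
        also have "\<dots> = (f i - sum f B) / real K" unfolding sP by (simp add: diff_divide_distrib[symmetric])
        finally show ?thesis .
      qed
      moreover have "\<bar>f i - sum f B\<bar> \<le> 1" using sB f01[of i] by auto
      moreover have "\<bar>f i - sum f B\<bar> / real K \<le> 1 / real K"
        using \<open>\<bar>f i - sum f B\<bar> \<le> 1\<close> Kp by (intro divide_right_mono) auto
      ultimately show ?thesis using True2 Kp mK by (simp add: abs_divide n_def)
    qed
  qed
qed




definition Pw :: "nat set \<Rightarrow> nat \<Rightarrow> nat set set" where "Pw A n = {S. S \<subseteq> A \<and> card S = n}"

lemma Pw_finite: "finite A \<Longrightarrow> finite (Pw A n)"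
  unfolding Pw_def by (rule finite_subset[of _ "Pow A"]) auto

lemma split_sum:
  assumes fA: "finite A" and x: "x \<in> A"
  shows "(\<Sum>S\<in>Pw A n. g S) = (\<Sum>T\<in>Pw (A - {x}) n. g T)
          + (if n = 0 then 0 else (\<Sum>T\<in>Pw (A - {x}) (n - 1). g (insert x T)))"
proof -
  have fB: "finite (A - {x})" using fA by simp
  have e: "Pw A n = Pw (A - {x}) n \<union> {S\<in>Pw A n. x \<in> S}" unfolding Pw_def by auto
  have d: "Pw (A - {x}) n \<inter> {S\<in>Pw A n. x \<in> S} = {}" unfolding Pw_def by auto
  have f1: "finite (Pw (A - {x}) n)" "finite {S\<in>Pw A n. x \<in> S}"
    using Pw_finite[OF fB] Pw_finite[OF fA] by auto
  have s1: "(\<Sum>S\<in>Pw A n. g S) = (\<Sum>T\<in>Pw (A - {x}) n. g T) + (\<Sum>S\<in>{S\<in>Pw A n. x \<in> S}. g S)"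
    by (subst e, rule sum.union_disjoint[OF f1 d])
  show ?thesis
  proof (cases "n = 0")
    case True
    have E: "{S\<in>Pw A n. x \<in> S} = {}"
    proof -
      have "S = {}" if "S \<subseteq> A" "card S = 0" for S
        using that finite_subset[OF that(1) fA] by simp
      then show ?thesis using True unfolding Pw_def by auto
    qed
    show ?thesis using s1 True unfolding E by simp
  next
    case False
    have img: "{S\<in>Pw A n. x \<in> S} = insert x ` Pw (A - {x}) (n - 1)"
    proof
      show "{S\<in>Pw A n. x \<in> S} \<subseteq> insert x ` Pw (A - {x}) (n - 1)"
      proof clarify
        fix S assume S: "S \<in> Pw A n" "x \<in> S"
        have fS: "finite S" using S unfolding Pw_def using finite_subset[OF _ fA] by auto
        have "S - {x} \<in> Pw (A - {x}) (n - 1)" using S fS unfolding Pw_def by auto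
        moreover have "S = insert x (S - {x})" using S by auto
        ultimately show "S \<in> insert x ` Pw (A - {x}) (n - 1)" by blast
      qed
    next
      show "insert x ` Pw (A - {x}) (n - 1) \<subseteq> {S\<in>Pw A n. x \<in> S}"
      proof (rule image_subsetI)
        fix T assume T: "T \<in> Pw (A - {x}) (n - 1)"
        have fT: "finite T" using T unfolding Pw_def using finite_subset[OF _ fB] by auto
        have "x \<notin> T" using T unfolding Pw_def by auto
        then have "card (insert x T) = n" using T fT False unfolding Pw_def by simp
        then show "insert x T \<in> {S\<in>Pw A n. x \<in> S}" using T x unfolding Pw_def by auto
      qed
    qed
    have inj: "inj_on (insert x) (Pw (A - {x}) (n - 1))"
    proof (rule inj_onI)
      fix T T' assume "T \<in> Pw (A - {x}) (n - 1)" "T' \<in> Pw (A - {x}) (n - 1)" "insert x T = insert x T'"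
      then have "x \<notin> T" "x \<notin> T'" "insert x T = insert x T'" unfolding Pw_def by auto
      then show "T = T'" by (metis Diff_insert_absorb)
    qed
    show ?thesis using s1 False unfolding img sum.reindex[OF inj] by simp
  qed
qed

lemma shap_alt:
  "shapley N K C y yt i = (1 / real N) * (\<Sum>n<N. (1 / real ((N - 1) choose n)) *
      (\<Sum>S\<in>Pw ({1..N} - {i}) n. knn_utility K C y yt (insert i S) - knn_utility K C y yt S))"
proof -
  have e: "{1..N} = Suc ` {..<N}"
  proof
    show "{1..N} \<subseteq> Suc ` {..<N}"
    proof
      fix x assume "x \<in> {1..N}"
      then have "x = Suc (x - 1)" "x - 1 < N" by auto
      then show "x \<in> Suc ` {..<N}" by blast
    qed
  qed auto
  show ?thesis unfolding shapley_def e by (simp add: sum.reindex Pw_def)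
qed

lemma hh:
  assumes "n + 1 \<le> N1"
  shows "1 / real (N1 choose n) + 1 / real (N1 choose Suc n) = real (N1 + 1) / (real N1 * real ((N1 - 1) choose n))"
proof -
  have a1: "real (N1 - n) * real (N1 choose n) = real N1 * real ((N1 - 1) choose n)"
    using binomial_absorb_comp[of N1 n] by (metis of_nat_mult)
  have a2: "real (Suc n) * real (N1 choose Suc n) = real N1 * real ((N1 - 1) choose n)"
    using binomial_absorption[of n N1] by (metis of_nat_mult)
  have X: "real ((N1 - 1) choose n) > 0" using assms by simp
  have N1p: "real N1 > 0" using assms by simp
  have p1: "real (N1 - n) > 0" using assms by simp
  have c1: "1 / real (N1 choose n) = real (N1 - n) / (real N1 * real ((N1 - 1) choose n))"
    using a1 X N1p p1 by (simp add: field_simps)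
  have c2: "1 / real (N1 choose Suc n) = real (Suc n) / (real N1 * real ((N1 - 1) choose n))"
    using a2 X N1p by (simp add: field_simps)
  have "real (N1 - n) + real (Suc n) = real (N1 + 1)" using assms by simp
  then show ?thesis unfolding c1 c2 by (simp add: add_divide_distrib[symmetric])
qed




lemma cancel_aux: "(a::real) \<noteq> 0 \<Longrightarrow> (1/a) * (a/d * g) = g/d"
  by (cases "d = 0") (simp_all add: field_simps)

lemma diffB:
  assumes i1: "1 \<le> i" and iN: "i < N" and K1: "K \<ge> 1" and NK: "K \<le> N"
  shows "shapley N K C y yt i - shapley N K C y yt (Suc i)
    = ((if y i = yt then 1 else 0) - (if y (Suc i) = yt then 1 else 0)) / real (N - 1)
      * (H K - 1 + real (min K i) * real (N-1) / (real i * real K))"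
proof -
  define U where "U = {1..N}"
  define M where "M = U - {i, Suc i}"
  define v where "v = knn_utility K C y yt"
  define c where "c = (if y i = yt then 1 else 0) - (if y (Suc i) = yt then (1::real) else 0)"
  define Ei where "Ei n = (\<Sum>S\<in>Pw (U - {i}) n. v (insert i S) - v S)" for n
  define Ej where "Ej n = (\<Sum>S\<in>Pw (U - {Suc i}) n. v (insert (Suc i) S) - v S)" for n
  define G where "G n = (\<Sum>T\<in>Pw M n. v (insert i T) - v (insert (Suc i) T))" for n
  define h where "h n = 1 / real ((N - 1) choose n)" for n
  obtain N1 where N1: "N = Suc N1" using iN by (cases N) auto
  have N1p: "N1 \<ge> 1" using N1 iN i1 by simp
  have fU: "finite U" unfolding U_def by simp
  have fM: "finite M" unfolding M_def using fU by simp
  have MA: "U - {i} - {Suc i} = M" "U - {Suc i} - {i} = M" unfolding M_def by auto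
  have Ediff: "Ei n - Ej n = G n + (if n = 0 then 0 else G (n - 1))" for n
  proof -
    have s1: "Ei n = (\<Sum>T\<in>Pw M n. v (insert i T) - v T)
        + (if n = 0 then 0 else (\<Sum>T\<in>Pw M (n - 1). v (insert i (insert (Suc i) T)) - v (insert (Suc i) T)))"
      unfolding Ei_def using split_sum[where A="U - {i}" and x="Suc i" and n=n and g="\<lambda>S. v (insert i S) - v S"] fU iN MA
      by (simp add: U_def)
    have s2: "Ej n = (\<Sum>T\<in>Pw M n. v (insert (Suc i) T) - v T)
        + (if n = 0 then 0 else (\<Sum>T\<in>Pw M (n - 1). v (insert (Suc i) (insert i T)) - v (insert i T)))"
      unfolding Ej_def using split_sum[where A="U - {Suc i}" and x=i and n=n and g="\<lambda>S. v (insert (Suc i) S) - v S"] fU iN i1 MA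
      by (simp add: U_def)
    have a: "(\<Sum>T\<in>Pw M n. v (insert i T) - v T) - (\<Sum>T\<in>Pw M n. v (insert (Suc i) T) - v T) = G n"
      unfolding G_def by (simp add: sum_subtractf[symmetric])
    have b: "(\<Sum>T\<in>Pw M m. v (insert i (insert (Suc i) T)) - v (insert (Suc i) T))
        - (\<Sum>T\<in>Pw M m. v (insert (Suc i) (insert i T)) - v (insert i T)) = G m" for m
      unfolding G_def by (simp add: sum_subtractf[symmetric] insert_commute)
    show ?thesis unfolding s1 s2 using a b[of "n - 1"] by auto
  qed
  have cardM: "card M = N - 2"
  proof -
    have "{i, Suc i} \<subseteq> U" using i1 iN unfolding U_def by auto
    then have "card M = card U - card {i, Suc i}" unfolding M_def using fU
      by (simp add: card_Diff_subset)
    then show ?thesis unfolding U_def by simp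
  qed
  define L where "L = {1..<i}"
  have LM: "L \<subseteq> M" unfolding L_def M_def U_def using iN by auto
  have cardL: "card L = i - 1" unfolding L_def by simp
  have Gval: "G n = c * real (cK (N-2) (i-1) K n) / real (min K (n+1))" for n
  proof -
    have "G n = (\<Sum>T\<in>Pw M n. if card (T \<inter> L) < K then c / real (min K (n+1)) else 0)"
      unfolding G_def
    proof (rule sum.cong)
      fix T assume T: "T \<in> Pw M n"
      then have TM: "T \<subseteq> M" and cT: "card T = n" unfolding Pw_def by auto
      have fT: "finite T" using TM fM by (rule finite_subset)
      have ni: "i \<notin> T" "Suc i \<notin> T" using TM unfolding M_def by auto
      have rkT: "rk T i = card (T \<inter> L)"
      proof -
        have "{t\<in>T. t < i} = T \<inter> L" using TM unfolding L_def M_def U_def by auto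
        then show ?thesis by (simp add: rk_def)
      qed
      show "v (insert i T) - v (insert (Suc i) T) = (if card (T \<inter> L) < K then c / real (min K (n+1)) else 0)"
      proof -
        have "v (insert i T) - v (insert (Suc i) T) = (if rk T i < K then c else 0) / real (min K (card T + 1))"
          unfolding v_def c_def by (rule dT[OF fT ni])
        then show ?thesis unfolding rkT cT by (cases "card (T \<inter> L) < K") simp_all
      qed
    qed simp
    also have "\<dots> = (\<Sum>T\<in>{T\<in>Pw M n. card (T \<inter> L) < K}. c / real (min K (n+1)))"
      by (subst sum.inter_filter) (auto intro: Pw_finite[OF fM])
    also have "{T\<in>Pw M n. card (T \<inter> L) < K} = {T. T \<subseteq> M \<and> card T = n \<and> card (T \<inter> L) < K}"
      unfolding Pw_def by auto
    finally have g: "G n = (\<Sum>T\<in>{T. T \<subseteq> M \<and> card T = n \<and> card (T \<inter> L) < K}. c / real (min K (n+1)))" .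
    have "card {T. T \<subseteq> M \<and> card T = n \<and> card (T \<inter> L) < K} = cK (N-2) (i-1) K n"
      using count_lt[OF fM LM] cardM cardL by simp
    then show ?thesis unfolding g by simp
  qed
  have G0: "G N1 = 0"
  proof -
    have "Pw M N1 = {}"
    proof -
      have "card T < N1" if "T \<subseteq> M" for T using card_mono[OF fM that] cardM N1 N1p by simp
      then show ?thesis unfolding Pw_def by (metis (mono_tags, lifting) empty_Collect_eq less_irrefl)
    qed
    then show ?thesis unfolding G_def by simp
  qed
  have sh1: "shapley N K C y yt i = (1 / real N) * (\<Sum>n<N. h n * Ei n)"
    unfolding shap_alt Ei_def h_def U_def v_def ..
  have sh2: "shapley N K C y yt (Suc i) = (1 / real N) * (\<Sum>n<N. h n * Ej n)"
    unfolding shap_alt Ej_def h_def U_def v_def ..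
  have sh: "shapley N K C y yt i - shapley N K C y yt (Suc i) = (1 / real N) * (\<Sum>n<N. h n * (Ei n - Ej n))"
    unfolding sh1 sh2 by (simp only: right_diff_distrib sum_subtractf)
  have "(\<Sum>n<N. h n * (Ei n - Ej n)) = (\<Sum>n<N. h n * G n) + (\<Sum>n<N. if n = 0 then 0 else h n * G (n - 1))"
    unfolding Ediff sum.distrib[symmetric] by (rule sum.cong) (auto simp: distrib_left)
  also have "(\<Sum>n<N. h n * G n) = (\<Sum>n<N1. h n * G n)" unfolding N1 by (simp add: G0)
  also have "(\<Sum>n<N. if n = 0 then 0 else h n * G (n - 1)) = (\<Sum>n<N1. h (Suc n) * G n)"
    unfolding N1 by (subst sum.lessThan_Suc_shift) simp
  also have "(\<Sum>n<N1. h n * G n) + (\<Sum>n<N1. h (Suc n) * G n) = (\<Sum>n<N1. (h n + h (Suc n)) * G n)"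
    by (simp add: sum.distrib distrib_right)
  also have "\<dots> = (\<Sum>n<N1. real N / (real N1 * real ((N1 - 1) choose n)) * G n)"
  proof (rule sum.cong)
    fix n assume "n \<in> {..<N1}"
    then have "n + 1 \<le> N1" by simp
    then show "(h n + h (Suc n)) * G n = real N / (real N1 * real ((N1 - 1) choose n)) * G n"
      unfolding h_def using hh[of n N1] N1 by simp
  qed simp
  finally have S: "(\<Sum>n<N. h n * (Ei n - Ej n)) = (\<Sum>n<N1. real N / (real N1 * real ((N1 - 1) choose n)) * G n)" .
  have "shapley N K C y yt i - shapley N K C y yt (Suc i)
      = (\<Sum>n<N1. G n / (real N1 * real ((N1 - 1) choose n)))"
    unfolding sh S sum_distrib_left by (rule sum.cong) (simp_all add: cancel_aux N1)
  also have "\<dots> = c / real N1 * (\<Sum>n<N1. real (cK (N-2) (i-1) K n) / (real ((N-2) choose n) * real (min K (n+1))))"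
    unfolding Gval sum_distrib_left
    by (rule sum.cong) (simp_all add: N1 field_simps)
  also have "{..<N1} = {..N-2}" using N1 N1p by auto
  also have "(\<Sum>n\<le>N-2. real (cK (N-2) (i-1) K n) / (real ((N-2) choose n) * real (min K (n+1))))
      = H K - 1 + real (min K (i-1+1)) * real (N-2+1) / (real (i-1+1) * real K)"
    by (rule GN) (use K1 iN NK in auto)
  finally show ?thesis using N1 i1 N1p by (simp add: c_def)
qed




lemma boundA:
  assumes i1: "1 \<le> i" and iN: "i \<le> N" and K1: "K \<ge> 1" and NK: "K \<le> N"
  shows "\<bar>shapley N K C y yt i - (1 / real N) * (1/2 - 1 / real C)\<bar>
         \<le> (1 / real N) * (H K - 3/2) + real (min K i) / (real i * real K)"
proof -
  define U where "U = {1..N}"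
  define v where "v = knn_utility K C y yt"
  define f where "f = (\<lambda>s. if y s = yt then 1 else (0::real))"
  define E where "E n = (\<Sum>S\<in>Pw (U - {i}) n. v (insert i S) - v S)" for n
  define h where "h n = 1 / real ((N - 1) choose n)" for n
  define b where "b n = real (cK (N-1) (i-1) K n) / real (min K (n+1))" for n
  obtain N1 where N1: "N = Suc N1" using iN i1 by (cases N) auto
  have fU: "finite U" unfolding U_def by simp
  define M where "M = U - {i}"
  have fM: "finite M" unfolding M_def using fU by simp
  have cardM: "card M = N - 1" unfolding M_def U_def using i1 iN by simp
  define L where "L = {1..<i}"
  have LM: "L \<subseteq> M" unfolding L_def M_def U_def using iN by auto
  have cardL: "card L = i - 1" unfolding L_def by simp
  have sh1: "shapley N K C y yt i = (1 / real N) * (\<Sum>n<N. h n * E n)"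
    unfolding shap_alt E_def h_def U_def v_def ..
  have vi: "v {i} = f i"
  proof -
    have "rk {i} i = 0" unfolding rk_def by simp
    then have "{s\<in>{i}. rk {i} s < min K (card {i})} = {i}" using K1 by auto
    then show ?thesis unfolding v_def using util[of "{i}" K C y yt] K1 by (simp add: f_def)
  qed
  have v0: "v {} = 1 / real C" unfolding v_def knn_utility_def by simp
  have Pw0: "Pw (U - {i}) 0 = {{}}"
  proof -
    have "S = {}" if "S \<subseteq> U - {i}" "card S = 0" for S
      using that finite_subset[OF that(1)] fU by simp
    then show ?thesis unfolding Pw_def by auto
  qed
  have E0: "E 0 = f i - 1 / real C" unfolding E_def Pw0 using vi v0 by simp
  have h0: "h 0 = 1" unfolding h_def by simp
  have b0: "b 0 = 1" unfolding b_def using vand[of "i-1" "N-1" 0 K] K1 i1 iN by simp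
  have Eb: "\<bar>E n\<bar> \<le> b n" if n1: "n \<ge> 1" for n
  proof -
    have "\<bar>E n\<bar> \<le> (\<Sum>S\<in>Pw M n. \<bar>v (insert i S) - v S\<bar>)"
      unfolding E_def M_def by (rule sum_abs)
    also have "\<dots> \<le> (\<Sum>S\<in>Pw M n. if card (S \<inter> L) < K then 1 / real (min K (n+1)) else 0)"
    proof (rule sum_mono)
      fix S assume S: "S \<in> Pw M n"
      then have SM: "S \<subseteq> M" and cS: "card S = n" unfolding Pw_def by auto
      have fS: "finite S" using SM fM by (rule finite_subset)
      have ni: "i \<notin> S" using SM unfolding M_def by auto
      have ne: "S \<noteq> {}" using cS n1 by auto
      have rkS: "rk S i = card (S \<inter> L)"
      proof -
        have "{t\<in>S. t < i} = S \<inter> L" using SM unfolding L_def M_def U_def by auto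
        then show ?thesis by (simp add: rk_def)
      qed
      have "\<bar>v (insert i S) - v S\<bar> \<le> (if rk S i < K then 1 else 0) / real (min K (card S + 1))"
        unfolding v_def by (rule Dbound[OF K1 fS ni ne])
      then show "\<bar>v (insert i S) - v S\<bar> \<le> (if card (S \<inter> L) < K then 1 / real (min K (n+1)) else 0)"
        unfolding rkS cS by (cases "card (S \<inter> L) < K") simp_all
    qed
    also have "\<dots> = (\<Sum>S\<in>{S\<in>Pw M n. card (S \<inter> L) < K}. 1 / real (min K (n+1)))"
      by (subst sum.inter_filter) (auto intro: Pw_finite[OF fM])
    also have "{S\<in>Pw M n. card (S \<inter> L) < K} = {T. T \<subseteq> M \<and> card T = n \<and> card (T \<inter> L) < K}"
      unfolding Pw_def by auto
    finally have g: "\<bar>E n\<bar> \<le> (\<Sum>S\<in>{T. T \<subseteq> M \<and> card T = n \<and> card (T \<inter> L) < K}. 1 / real (min K (n+1)))" .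
    have "card {T. T \<subseteq> M \<and> card T = n \<and> card (T \<inter> L) < K} = cK (N-1) (i-1) K n"
      using count_lt[OF fM LM] cardM cardL by simp
    then show ?thesis using g unfolding b_def by simp
  qed
  have hpos: "h n \<ge> 0" for n unfolding h_def by simp
  have split: "(\<Sum>n<N. g n) = g 0 + (\<Sum>n<N1. g (Suc n))" for g :: "nat \<Rightarrow> real"
    unfolding N1 by (rule sum.lessThan_Suc_shift)
  have hb: "(\<Sum>n<N. h n * b n) = H K - 1 + real (min K i) * real N / (real i * real K)"
  proof -
    have "(\<Sum>n<N. h n * b n) = (\<Sum>n\<le>N-1. real (cK (N-1) (i-1) K n) / (real ((N-1) choose n) * real (min K (n+1))))"
    proof -
      have "{..<N} = {..N-1}" using N1 by auto
      then show ?thesis unfolding h_def b_def by simp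
    qed
    also have "\<dots> = H K - 1 + real (min K (i-1+1)) * real (N-1+1) / (real (i-1+1) * real K)"
      by (rule GN) (use K1 iN NK in auto)
    finally show ?thesis using i1 N1 by simp
  qed
  have "\<bar>shapley N K C y yt i - (1 / real N) * (1/2 - 1 / real C)\<bar>
      = (1 / real N) * \<bar>(f i - 1/2) + (\<Sum>n<N1. h (Suc n) * E (Suc n))\<bar>"
  proof -
    have "shapley N K C y yt i - (1 / real N) * (1/2 - 1 / real C) = (1 / real N) * ((f i - 1/2) + (\<Sum>n<N1. h (Suc n) * E (Suc n)))"
      unfolding sh1 split[of "\<lambda>n. h n * E n"] h0 E0 by (simp add: algebra_simps)
    then show ?thesis by (simp add: abs_mult)
  qed
  also have "\<dots> \<le> (1 / real N) * (1/2 + (\<Sum>n<N1. h (Suc n) * b (Suc n)))"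
  proof (rule mult_left_mono)
    have "\<bar>f i - 1/2\<bar> = 1/2" unfolding f_def by simp
    moreover have "\<bar>\<Sum>n<N1. h (Suc n) * E (Suc n)\<bar> \<le> (\<Sum>n<N1. h (Suc n) * b (Suc n))"
    proof -
      have "\<bar>\<Sum>n<N1. h (Suc n) * E (Suc n)\<bar> \<le> (\<Sum>n<N1. \<bar>h (Suc n) * E (Suc n)\<bar>)" by (rule sum_abs)
      also have "\<dots> \<le> (\<Sum>n<N1. h (Suc n) * b (Suc n))"
      proof (rule sum_mono)
        fix n show "\<bar>h (Suc n) * E (Suc n)\<bar> \<le> h (Suc n) * b (Suc n)"
          using Eb[of "Suc n"] hpos[of "Suc n"] by (simp add: abs_mult mult_left_mono)
      qed
      finally show ?thesis .
    qed
    ultimately show "\<bar>(f i - 1/2) + (\<Sum>n<N1. h (Suc n) * E (Suc n))\<bar> \<le> 1/2 + (\<Sum>n<N1. h (Suc n) * b (Suc n))"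
      using abs_triangle_ineq[of "f i - 1/2" "\<Sum>n<N1. h (Suc n) * E (Suc n)"] by linarith
  qed simp
  also have "(\<Sum>n<N1. h (Suc n) * b (Suc n)) = H K - 2 + real (min K i) * real N / (real i * real K)"
    using hb unfolding split[of "\<lambda>n. h n * b n"] h0 b0 by simp
  also have "(1 / real N) * (1/2 + (H K - 2 + real (min K i) * real N / (real i * real K)))
      = (1 / real N) * (H K - 3/2) + real (min K i) / (real i * real K)"
    using N1 by (simp add: field_simps)
  finally show ?thesis .
qed

lemma Hsum: "K \<ge> 2 \<Longrightarrow> (\<Sum>j=2..K-1. 1 / real (j+1)) = H K - 3/2"
proof (induction K rule: nat_induct_at_least)
  case base
  then show ?case by (simp add: H_def numeral_2_eq_2)
next
  case (Suc n)
  have "(\<Sum>j=2..Suc n - 1. 1 / real (j+1)) = (\<Sum>j=2..n-1. 1 / real (j+1)) + 1 / real (Suc n)"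
  proof -
    have "{2..n} = insert n {2..n-1}" using Suc.hyps by auto
    moreover have "n \<notin> {2..n-1}" by auto
    ultimately show ?thesis by simp
  qed
  then show ?case using Suc.IH by (simp add: H_def)
qed

lemma Hbound: "K \<ge> 1 \<Longrightarrow> H K - 3/2 \<le> (\<Sum>j=2..K-1. 1 / real (j+1))"
proof (cases "K \<ge> 2")
  case True then show ?thesis using Hsum by simp
next
  case False
  assume "K \<ge> 1"
  then have "K = 1" using False by simp
  then show ?thesis by (simp add: H_def)
qed

lemma minmax:
  assumes "Ks \<le> i" "1 \<le> i" "1 \<le> K"
  shows "real (min K i) / (real i * real K) \<le> 1 / real (max Ks K)"
proof -
  have "real (min K i) / (real i * real K) = 1 / real (max i K)"
    using assms by (cases "K \<le> i") (simp_all add: min_def max_def field_simps)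
  also have "\<dots> \<le> 1 / real (max Ks K)"
    using assms by (intro divide_left_mono) auto
  finally show ?thesis .
qed




theorem theorem3:
  fixes N K Kstar :: nat
    and x :: "nat \<Rightarrow> 'a::euclidean_space" and xtest :: 'a
    and Y :: "'c set" and y :: "nat \<Rightarrow> 'c" and ytest :: 'c
    and phihat :: "nat \<Rightarrow> real"
  assumes finY: "finite Y" and CY: "card Y \<ge> 1"
    and ylab: "\<forall>i \<in> {1..N}. y i \<in> Y" and ytestlab: "ytest \<in> Y"
    and Kpos: "K \<ge> 1" and N2: "N \<ge> 2" and NK: "N \<ge> K"
    and sorted: "\<forall>i j. 1 \<le> i \<longrightarrow> i \<le> j \<longrightarrow> j \<le> N \<longrightarrow>
                   norm (x i - xtest) \<le> norm (x j - xtest)"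
    and Ks1: "1 \<le> Kstar" and KsN: "Kstar < N"
    and ph_base: "\<forall>i. Kstar \<le> i \<and> i \<le> N \<longrightarrow>
                    phihat i = (1 / real N) * (1 / 2 - 1 / real (card Y))"
    and ph_rec: "\<forall>i. 1 \<le> i \<and> i < Kstar \<longrightarrow>
                    phihat i = phihat (i + 1) +
                      ((if y i = ytest then 1 else 0) - (if y (i + 1) = ytest then 1 else 0)) / real (N - 1) *
                      ((\<Sum>j = 1..K. 1 / real j) +
                       (1 / real K) * (real (min i K) * real (N - 1) / real i - real K))"
  shows "Max ((\<lambda>i. \<bar>phihat i - shapley N K (card Y) y ytest i\<bar>) ` {1..N})
           \<le> (1 / real N) * (\<Sum>j = 2..K - 1. 1 / real (j + 1)) + 1 / real (max Kstar K)"
proof -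
  define e where "e i = phihat i - shapley N K (card Y) y ytest i" for i
  define B where "B = (1 / real N) * (\<Sum>j = 2..K - 1. 1 / real (j + 1)) + 1 / real (max Kstar K)"
  have step: "e i = e (Suc i)" if i: "1 \<le> i" "i < Kstar" for i
  proof -
    define c where "c = (if y i = ytest then 1 else 0) - (if y (Suc i) = ytest then 1 else (0::real))"
    have coef: "(\<Sum>j = 1..K. 1 / real j) + (1 / real K) * (real (min i K) * real (N - 1) / real i - real K)
        = H K - 1 + real (min K i) * real (N-1) / (real i * real K)"
      using Kpos by (simp add: H_def field_simps min.commute)
    have p: "phihat i = phihat (Suc i) + c / real (N - 1) * (H K - 1 + real (min K i) * real (N-1) / (real i * real K))"
      using ph_rec i unfolding c_def coef[symmetric] by simp
    have s: "shapley N K (card Y) y ytest i - shapley N K (card Y) y ytest (Suc i)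
        = c / real (N - 1) * (H K - 1 + real (min K i) * real (N-1) / (real i * real K))"
      unfolding c_def by (rule diffB) (use i KsN Kpos NK in auto)
    show ?thesis unfolding e_def using p s by simp
  qed
  have key: "\<forall>i. i + d = Kstar \<longrightarrow> 1 \<le> i \<longrightarrow> e i = e Kstar" for d
  proof (induction d)
    case 0 then show ?case by simp
  next
    case (Suc d)
    show ?case
    proof (intro allI impI)
      fix i assume a: "i + Suc d = Kstar" "1 \<le> i"
      then have "e i = e (Suc i)" using step by simp
      also have "e (Suc i) = e Kstar" using Suc.IH a by simp
      finally show "e i = e Kstar" .
    qed
  qed
  have bnd: "\<bar>e j\<bar> \<le> B" if j: "Kstar \<le> j" "j \<le> N" for j
  proof -
    have j1: "1 \<le> j" using j Ks1 by simp
    have "\<bar>e j\<bar> = \<bar>shapley N K (card Y) y ytest j - (1 / real N) * (1/2 - 1 / real (card Y))\<bar>"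
      unfolding e_def using ph_base j by simp
    also have "\<dots> \<le> (1 / real N) * (H K - 3/2) + real (min K j) / (real j * real K)"
      by (rule boundA) (use j1 j Kpos NK in auto)
    also have "\<dots> \<le> B" unfolding B_def
    proof (rule add_mono)
      show "(1 / real N) * (H K - 3/2) \<le> (1 / real N) * (\<Sum>j = 2..K - 1. 1 / real (j + 1))"
        using Hbound[OF Kpos] by (intro mult_left_mono) auto
      show "real (min K j) / (real j * real K) \<le> 1 / real (max Kstar K)"
        by (rule minmax) (use j j1 Kpos in auto)
    qed
    finally show ?thesis .
  qed
  have all: "\<bar>e i\<bar> \<le> B" if i: "i \<in> {1..N}" for i
  proof (cases "Kstar \<le> i")
    case True then show ?thesis using bnd i by auto
  next
    case False
    then have "e i = e Kstar" using key[of "Kstar - i"] i by auto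
    then show ?thesis using bnd[of Kstar] KsN by simp
  qed
  show ?thesis unfolding B_def[symmetric]
    using all N2 unfolding e_def by (intro Max.boundedI) auto
qed


end
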